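(* If $M'$ is a minor of a finite matroid $M$, then $\mathrm{bd}(M')\le\mathrm{bd}(M)$.
   Context: For a rooted tree $T$, $\|T\|$ is its number of edges and its depth is the number of edges of a longest root-to-leaf path. A depth-decomposition of a finite matroid $M$ (rank function $r$) is a pair $(T,f)$ with $T$ a rooted tree and $f:M\to V(T)$ such that (1) $r(M)=\|T\|$ and (2) $r(X)\le\|T^*(X)\|$ for every $X\subseteq M$, where $T^*(X)$ is the union of the paths from the root to all vertices of $f(X)$. The branch-depth $\mathrm{bd}(M)$ is the minimum depth of $T$ over all depth-decompositions $(T,f)$ of $M$. *)

theory Defs
  imports Main
begin

type_synonym 'a matroid = "'a set \<times> ('a set \<Rightarrow> nat)"

definition matroid :: "'a matroid \<Rightarrow> bool" where
  "matroid M \<longleftrightarrow> (case M of (E, r) \<Rightarrow>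
     finite E \<and>
     (\<forall>X. X \<subseteq> E \<longrightarrow> r X \<le> card X) \<and>
     (\<forall>X Y. X \<subseteq> Y \<and> Y \<subseteq> E \<longrightarrow> r X \<le> r Y) \<and>
     (\<forall>X Y. X \<subseteq> E \<and> Y \<subseteq> E \<longrightarrow> r (X \<union> Y) + r (X \<inter> Y) \<le> r X + r Y))"

text \<open>Minor: M' = (M / C) \ D for disjoint C, D \<subseteq> E. The contraction M / C has
rank function Y \<mapsto> r (Y \<union> C) - r C; deletion restricts the ground set.\<close>

definition minor :: "'a matroid \<Rightarrow> 'a matroid \<Rightarrow> bool" where
  "minor M' M \<longleftrightarrow> matroid M \<and>
     (\<exists>C D. C \<subseteq> fst M \<and> D \<subseteq> fst M \<and> C \<inter> D = {} \<and>
        fst M' = fst M - C - D \<and>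
        (\<forall>Y. Y \<subseteq> fst M' \<longrightarrow> snd M' Y = snd M (Y \<union> C) - snd M C))"

text \<open>A rooted tree with vertex set V \<subseteq> nat, root rt and parent map par:
every vertex reaches the root by iterating par. The tree edges are the pairs
(v, par v) for v \<in> V - {rt}.\<close>

definition rooted_tree :: "nat set \<Rightarrow> nat \<Rightarrow> (nat \<Rightarrow> nat) \<Rightarrow> bool" where
  "rooted_tree V rt par \<longleftrightarrow> finite V \<and> rt \<in> V \<and>
     (\<forall>v \<in> V - {rt}. par v \<in> V) \<and>
     (\<forall>v \<in> V. \<exists>k. (par ^^ k) v = rt)"

definition vdepth :: "nat \<Rightarrow> (nat \<Rightarrow> nat) \<Rightarrow> nat \<Rightarrow> nat" where
  "vdepth rt par v = (LEAST k. (par ^^ k) v = rt)"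

definition root_path :: "nat \<Rightarrow> (nat \<Rightarrow> nat) \<Rightarrow> nat \<Rightarrow> nat set" where
  "root_path rt par v = {(par ^^ i) v | i. i \<le> vdepth rt par v}"

definition tree_depth :: "nat set \<Rightarrow> nat \<Rightarrow> (nat \<Rightarrow> nat) \<Rightarrow> nat" where
  "tree_depth V rt par = Max (vdepth rt par ` V)"

text \<open>Number of edges of T*(X): each non-root vertex of the union of the root
paths contributes exactly one edge (to its parent).\<close>
definition subtree_edges ::
  "nat \<Rightarrow> (nat \<Rightarrow> nat) \<Rightarrow> ('a \<Rightarrow> nat) \<Rightarrow> 'a set \<Rightarrow> nat" where
  "subtree_edges rt par f X = card ((\<Union>x \<in> X. root_path rt par (f x)) - {rt})"

definition depth_decomposition ::
  "'a matroid \<Rightarrow> nat set \<Rightarrow> nat \<Rightarrow> (nat \<Rightarrow> nat) \<Rightarrow> ('a \<Rightarrow> nat) \<Rightarrow> bool" where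
  "depth_decomposition M V rt par f \<longleftrightarrow>
     rooted_tree V rt par \<and> (\<forall>x \<in> fst M. f x \<in> V) \<and>
     snd M (fst M) = card V - 1 \<and>
     (\<forall>X. X \<subseteq> fst M \<longrightarrow> snd M X \<le> subtree_edges rt par f X)"

definition branch_depth :: "'a matroid \<Rightarrow> nat" where
  "branch_depth M = (LEAST d. \<exists>V rt par f.
      depth_decomposition M V rt par f \<and> tree_depth V rt par = d)"

end

theory Submission
  imports Defs
begin

definition reach :: "nat \<Rightarrow> (nat \<Rightarrow> nat) \<Rightarrow> nat \<Rightarrow> bool" where
  "reach rt par v \<longleftrightarrow> (\<exists>k. (par ^^ k) v = rt)"

lemma funpow_Suc_app: "(par ^^ Suc k) v = (par ^^ k) (par v)"
  by (simp only: funpow_Suc_right o_apply)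

lemma rp_rt: "root_path rt par rt = {rt}" "vdepth rt par rt = 0"
  by (auto simp: root_path_def vdepth_def)

lemma reach_rec:
  assumes "reach rt par v" "v \<noteq> rt"
  shows "reach rt par (par v)" and "vdepth rt par v = Suc (vdepth rt par (par v))"
    and "root_path rt par v = insert v (root_path rt par (par v))"
proof -
  obtain k where k: "(par ^^ k) v = rt" using assms unfolding reach_def by blast
  then obtain k' where kk: "k = Suc k'" using assms(2) by (cases k) auto
  hence k': "(par^^k') (par v) = rt" using k by (simp only: funpow_Suc_app)
  show "reach rt par (par v)" using k' unfolding reach_def by blast
  have "(LEAST k. (par^^k) v = rt) = Suc (LEAST m. (par^^Suc m) v = rt)"
    by (rule Least_Suc[of _ k]) (use k assms(2) in auto)
  then show vd: "vdepth rt par v = Suc (vdepth rt par (par v))"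
    unfolding vdepth_def by (simp only: funpow_Suc_app)
  have "{(par ^^ i) v |i. i \<le> Suc n} = insert v {(par ^^ i) (par v) |i. i \<le> n}" for n
  proof (intro set_eqI iffI)
    fix x assume "x \<in> {(par ^^ i) v |i. i \<le> Suc n}"
    then obtain i where "x = (par^^i) v" "i \<le> Suc n" by blast
    then show "x \<in> insert v {(par ^^ i) (par v) |i. i \<le> n}"
      by (cases i) (auto simp del: funpow.simps simp: funpow_Suc_app)
  next
    fix x assume "x \<in> insert v {(par ^^ i) (par v) |i. i \<le> n}"
    then consider "x = v" | i where "x = (par^^i) (par v)" "i \<le> n" by blast
    then show "x \<in> {(par ^^ i) v |i. i \<le> Suc n}"
    proof cases
      case 1 then show ?thesis by (intro CollectI exI[of _ 0]) auto
    next
      case 2 then show ?thesis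
        by (intro CollectI exI[of _ "Suc i"]) (simp del: funpow.simps add: funpow_Suc_app)
    qed
  qed
  then show "root_path rt par v = insert v (root_path rt par (par v))"
    unfolding root_path_def vd by blast
qed

lemma reach_induct[consumes 1, case_names base step]:
  assumes "reach rt par v"
    and "P rt"
    and "\<And>v. reach rt par v \<Longrightarrow> v \<noteq> rt \<Longrightarrow> P (par v) \<Longrightarrow> P v"
  shows "P v"
proof -
  have "\<forall>v. reach rt par v \<longrightarrow> vdepth rt par v = n \<longrightarrow> P v" for n
  proof (induction n)
    case 0
    then show ?case using assms(2,3) reach_rec by (metis nat.distinct(1))
  next
    case (Suc n)
    then show ?case using assms(2,3) reach_rec by (metis nat.inject)
  qed
  then show ?thesis using assms(1) by blast
qed

lemma rp_props:
  assumes "reach rt par v"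
  shows "v \<in> root_path rt par v" "rt \<in> root_path rt par v"
    "\<And>w. w \<in> root_path rt par v \<Longrightarrow> reach rt par w \<and> root_path rt par w \<subseteq> root_path rt par v"
    "finite (root_path rt par v)"
proof -
  show "v \<in> root_path rt par v" unfolding root_path_def by (intro CollectI exI[of _ 0]) auto
  show "finite (root_path rt par v)"
  proof -
    have "root_path rt par v = (\<lambda>i. (par^^i) v) ` {..vdepth rt par v}"
      unfolding root_path_def by auto
    then show ?thesis by simp
  qed
  have "rt \<in> root_path rt par v \<and> (\<forall>w. w \<in> root_path rt par v \<longrightarrow> reach rt par w \<and> root_path rt par w \<subseteq> root_path rt par v)"
    using assms
  proof (induction rule: reach_induct)
    case base
    then show ?case by (auto simp: rp_rt reach_def intro: exI[of _ 0])
  next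
    case (step v)
    then show ?case using reach_rec[OF step(1,2)] by auto
  qed
  then show "rt \<in> root_path rt par v"
    "\<And>w. w \<in> root_path rt par v \<Longrightarrow> reach rt par w \<and> root_path rt par w \<subseteq> root_path rt par v"
    by auto
qed

lemma rp_sub_V:
  assumes "rooted_tree V rt par" "v \<in> V"
  shows "root_path rt par v \<subseteq> V"
proof -
  have r: "reach rt par v" using assms unfolding rooted_tree_def reach_def by blast
  have "v \<in> V \<longrightarrow> root_path rt par v \<subseteq> V" using r
  proof (induction rule: reach_induct)
    case base then show ?case by (simp add: rp_rt)
  next
    case (step v) then show ?case using reach_rec[OF step(1,2)] assms(1)
      unfolding rooted_tree_def by auto
  qed
  then show ?thesis using assms by blast
qed

lemma contract_tree:
  fixes u rt par
  defines "par' \<equiv> \<lambda>v. if par v = u then par u else par v"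
  assumes "u \<noteq> rt" "reach rt par v" "v \<noteq> u"
  shows "reach rt par' v \<and> root_path rt par' v = root_path rt par v - {u}
     \<and> vdepth rt par' v \<le> vdepth rt par v"
proof -
  have "\<forall>v. reach rt par v \<longrightarrow> v \<noteq> u \<longrightarrow> vdepth rt par v = n \<longrightarrow>
     reach rt par' v \<and> root_path rt par' v = root_path rt par v - {u}
     \<and> vdepth rt par' v \<le> vdepth rt par v" for n
  proof (induction n rule: less_induct)
    case (less n)
    show ?case
    proof (intro allI impI)
      fix v assume rv: "reach rt par v" and vu: "v \<noteq> u" and dv: "vdepth rt par v = n"
      show "reach rt par' v \<and> root_path rt par' v = root_path rt par v - {u}
         \<and> vdepth rt par' v \<le> vdepth rt par v"
      proof (cases "v = rt")
        case True
        then show ?thesis using assms(2) by (auto simp: rp_rt reach_def intro: exI[of _ 0])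
      next
        case False
        note R = reach_rec[OF rv False]
        obtain w where w: "par' v = w" "reach rt par w" "w \<noteq> u" "vdepth rt par w < n"
          "root_path rt par v - {u} = insert v (root_path rt par w - {u})"
          "Suc (vdepth rt par w) \<le> vdepth rt par v"
        proof (cases "par v = u")
          case True
          note R2 = reach_rec[of rt par u, OF R(1)[unfolded True] assms(2)]
          have "par u \<noteq> u" using R2(2) by auto
          moreover have "root_path rt par v - {u} = insert v (root_path rt par (par u) - {u})"
            using R(3) R2(3) True vu by blast
          ultimately show ?thesis
            using that[of "par u"] R R2 True dv vu unfolding par'_def by auto
        next
          case False
          then show ?thesis
            using that[of "par v"] R dv vu unfolding par'_def by auto
        qed
        have IH: "reach rt par' w \<and> root_path rt par' w = root_path rt par w - {u}
          \<and> vdepth rt par' w \<le> vdepth rt par w"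
          using less w by blast
        have rv': "reach rt par' v"
        proof -
          obtain k where "(par'^^k) w = rt" using IH unfolding reach_def by blast
          then have "(par'^^Suc k) v = rt" using w(1) by (simp only: funpow_Suc_app)
          then show ?thesis unfolding reach_def by blast
        qed
        note R' = reach_rec[OF rv' False]
        show ?thesis using R' IH w rv' by auto
      qed
    qed
  qed
  then show ?thesis using assms by blast
qed


lemma matroidD:
  assumes "matroid (E, r)"
  shows "finite E" "\<And>X. X \<subseteq> E \<Longrightarrow> r X \<le> card X"
    "\<And>X Y. X \<subseteq> Y \<Longrightarrow> Y \<subseteq> E \<Longrightarrow> r X \<le> r Y"
    "\<And>X Y. X \<subseteq> E \<Longrightarrow> Y \<subseteq> E \<Longrightarrow> r (X \<union> Y) + r (X \<inter> Y) \<le> r X + r Y"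
  using assms unfolding matroid_def by auto

lemma matroid_empty: "matroid (E, r) \<Longrightarrow> r {} = 0"
  using matroidD(2)[of E r "{}"] by simp

lemma matroid_single: "matroid (E, r) \<Longrightarrow> e \<in> E \<Longrightarrow> r {e} \<le> 1"
  using matroidD(2)[of E r "{e}"] by simp

lemma matroid_add:
  assumes "matroid (E, r)" "X \<subseteq> E" "e \<in> E" "e \<notin> X"
  shows "r (X \<union> {e}) \<le> r X + r {e}"
proof -
  have i: "X \<inter> {e} = {}" using assms by auto
  have "r (X \<union> {e}) + r {} \<le> r X + r {e}" using matroidD(4)[OF assms(1), of X "{e}"] assms(2,3)
    unfolding i by simp
  then show ?thesis using matroid_empty[OF assms(1)] by simp
qed

lemma matroid_del: assumes "matroid (E, r)" shows "matroid (E - {e}, r)"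
proof -
  note D = matroidD[OF assms]
  show ?thesis unfolding matroid_def using D
    by (simp (no_asm_simp)) (meson Diff_subset order_trans)
qed

lemma matroid_con:
  assumes m: "matroid (E, r)" and e: "e \<in> E"
  shows "matroid (E - {e}, \<lambda>Y. r (Y \<union> {e}) - r {e})"
proof -
  have fin: "finite (E - {e})" using matroidD(1)[OF m] by simp
  have c: "r (X \<union> {e}) - r {e} \<le> card X" if "X \<subseteq> E - {e}" for X
  proof -
    have "X \<subseteq> E" "e \<notin> X" using that by auto
    then show ?thesis using matroid_add[OF m, of X e] matroidD(2)[OF m, of X] e by linarith
  qed
  have mo: "r (X \<union> {e}) - r {e} \<le> r (Y \<union> {e}) - r {e}" if "X \<subseteq> Y" "Y \<subseteq> E - {e}" for X Y
  proof -
    have "X \<union> {e} \<subseteq> Y \<union> {e}" "Y \<union> {e} \<subseteq> E" using that e by auto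
    then show ?thesis using matroidD(3)[OF m, of "X \<union> {e}" "Y \<union> {e}"] by linarith
  qed
  have sm: "r (X \<union> Y \<union> {e}) - r {e} + (r (X \<inter> Y \<union> {e}) - r {e})
      \<le> r (X \<union> {e}) - r {e} + (r (Y \<union> {e}) - r {e})" if "X \<subseteq> E - {e}" "Y \<subseteq> E - {e}" for X Y
  proof -
    have sub: "X \<union> {e} \<subseteq> E" "Y \<union> {e} \<subseteq> E" using that e by auto
    have h: "r ((X \<union> {e}) \<union> (Y \<union> {e})) + r ((X \<union> {e}) \<inter> (Y \<union> {e})) \<le> r (X \<union> {e}) + r (Y \<union> {e})"
      by (rule matroidD(4)[OF m sub])
    have eq: "(X \<union> {e}) \<union> (Y \<union> {e}) = X \<union> Y \<union> {e}" "(X \<union> {e}) \<inter> (Y \<union> {e}) = X \<inter> Y \<union> {e}" by auto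
    have ge: "r {e} \<le> r (Z \<union> {e})" if "Z \<subseteq> E - {e}" for Z
    proof -
      have "{e} \<subseteq> Z \<union> {e}" "Z \<union> {e} \<subseteq> E" using that e by auto
      then show ?thesis using matroidD(3)[OF m] by blast
    qed
    have g1: "r {e} \<le> r (X \<union> Y \<union> {e})" using ge[of "X \<union> Y"] that by auto
    have g2: "r {e} \<le> r (X \<inter> Y \<union> {e})" using ge[of "X \<inter> Y"] that by auto
    have g3: "r {e} \<le> r (X \<union> {e})" using ge[of "X"] that by auto
    have g4: "r {e} \<le> r (Y \<union> {e})" using ge[of "Y"] that by auto
    show ?thesis using h[unfolded eq] g1 g2 g3 g4 by linarith
  qed
  show ?thesis unfolding matroid_def using fin c mo sm by auto
qed

lemma dd_cong:
  assumes "depth_decomposition (E, r) V rt par f" "\<And>Y. Y \<subseteq> E \<Longrightarrow> r' Y = r Y"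
  shows "depth_decomposition (E, r') V rt par f"
  using assms unfolding depth_decomposition_def by auto


lemma rooted_reach: "rooted_tree V rt par \<Longrightarrow> v \<in> V \<Longrightarrow> reach rt par v"
  unfolding rooted_tree_def reach_def by blast

lemma contract_dd:
  assumes dd: "depth_decomposition (E, r) V rt par f" and m: "matroid (E, r)"
    and e: "e \<in> E" and fe: "f e \<noteq> rt"
    and rk: "r1 (E - {e}) + 1 = r E"
    and le: "\<And>Y. Y \<subseteq> E - {e} \<Longrightarrow> r1 Y + 1 \<le> r (Y \<union> {e})"
  shows "\<exists>V' rt' par' f'. depth_decomposition (E - {e}, r1) V' rt' par' f'
           \<and> tree_depth V' rt' par' \<le> tree_depth V rt par"
proof -
  define u where "u = f e"
  define par' where "par' = (\<lambda>v. if par v = u then par u else par v)"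
  define G where "G = (\<lambda>w. if w = u then par u else w)"
  define V' where "V' = V - {u}"
  have tr: "rooted_tree V rt par" and fV: "\<And>x. x \<in> E \<Longrightarrow> f x \<in> V"
    and rE: "r E = card V - 1"
    and bnd: "\<And>X. X \<subseteq> E \<Longrightarrow> r X \<le> subtree_edges rt par f X"
    using dd unfolding depth_decomposition_def by auto
  have finV: "finite V" and rtV: "rt \<in> V" and parV: "\<And>v. v \<in> V - {rt} \<Longrightarrow> par v \<in> V"
    using tr unfolding rooted_tree_def by auto
  have uV: "u \<in> V" using fV e u_def by auto
  have urt: "u \<noteq> rt" using fe u_def by auto
  have ru: "reach rt par u" using rooted_reach[OF tr uV] .
  note Ru = reach_rec[OF ru urt]
  have puu: "par u \<noteq> u" using Ru(2) by auto
  have puV: "par u \<in> V" using parV uV urt by auto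
  have CT: "\<And>v. v \<in> V' \<Longrightarrow> reach rt par' v \<and> root_path rt par' v = root_path rt par v - {u}
     \<and> vdepth rt par' v \<le> vdepth rt par v"
    unfolding par'_def V'_def using contract_tree[OF urt] rooted_reach[OF tr] by blast
  have GV: "\<And>w. w \<in> V \<Longrightarrow> G w \<in> V'" unfolding G_def V'_def using puV puu by auto
  have Grp: "\<And>w. w \<in> V \<Longrightarrow> root_path rt par' (G w) = root_path rt par w - {u}"
  proof -
    fix w assume w: "w \<in> V"
    show "root_path rt par' (G w) = root_path rt par w - {u}"
    proof (cases "w = u")
      case True
      have "par u \<in> V'" using puV puu V'_def by auto
      then have "root_path rt par' (par u) = root_path rt par (par u) - {u}" using CT by blast
      then show ?thesis using True Ru(3) G_def by auto
    next
      case False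
      then show ?thesis using CT[of w] w G_def V'_def by auto
    qed
  qed
  have tr': "rooted_tree V' rt par'"
    unfolding rooted_tree_def
  proof (intro conjI ballI)
    show "finite V'" using finV V'_def by auto
    show "rt \<in> V'" using rtV urt V'_def by auto
    fix v assume "v \<in> V' - {rt}"
    then show "par' v \<in> V'" using parV puV puu unfolding par'_def V'_def by auto
  next
    fix v assume "v \<in> V'"
    then show "\<exists>k. (par' ^^ k) v = rt" using CT unfolding reach_def by blast
  qed
  have cardV: "card V' = card V - 1" using finV uV V'_def by auto
  have cardV2: "card V \<ge> 2"
  proof -
    have "{rt, u} \<subseteq> V" using rtV uV by auto
    then have "card {rt, u} \<le> card V" using finV card_mono by blast
    then show ?thesis using urt by auto
  qed
  define f' where "f' = G \<circ> f"
  have dd': "depth_decomposition (E - {e}, r1) V' rt par' f'"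
    unfolding depth_decomposition_def
  proof (intro conjI allI impI ballI)
    show "rooted_tree V' rt par'" by (rule tr')
    fix x assume "x \<in> fst (E - {e}, r1)"
    then show "f' x \<in> V'" using GV fV f'_def by auto
  next
    show "snd (E - {e}, r1) (fst (E - {e}, r1)) = card V' - 1"
      using rk rE cardV cardV2 by simp
  next
    fix X assume "X \<subseteq> fst (E - {e}, r1)"
    then have X: "X \<subseteq> E - {e}" by simp
    define P where "P = (\<Union>x\<in>X. root_path rt par (f x)) - {rt}"
    have XE: "X \<subseteq> E" using X by auto
    have finP: "finite P" unfolding P_def
      using rp_sub_V[OF tr] fV XE finV by (meson Diff_subset UN_least finite_subset subsetD)
    have se: "subtree_edges rt par' f' X = card (P - {u})"
    proof -
      have "(\<Union>x\<in>X. root_path rt par' (f' x)) = (\<Union>x\<in>X. root_path rt par (f x) - {u})"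
      proof (rule SUP_cong[OF refl])
        fix x assume "x \<in> X"
        then show "root_path rt par' (f' x) = root_path rt par (f x) - {u}"
          using Grp fV XE f'_def by auto
      qed
      moreover have "(\<Union>x\<in>X. root_path rt par (f x) - {u}) - {rt} = P - {u}"
        unfolding P_def by blast
      ultimately show ?thesis unfolding subtree_edges_def by simp
    qed
    have bX: "r X \<le> card P" using bnd[OF XE] unfolding subtree_edges_def P_def .
    have ee: "e \<notin> X" using X by auto
    have r1X: "r1 X + 1 \<le> r (X \<union> {e})" using le[OF X] .
    have addX: "r (X \<union> {e}) \<le> r X + 1"
      using matroid_add[OF m XE e ee] matroid_single[OF m e] by linarith
    show "snd (E - {e}, r1) X \<le> subtree_edges rt par' f' X"
    proof (cases "u \<in> P")
      case False
      then have "P - {u} = P" by auto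
      then show ?thesis using se bX r1X addX by simp
    next
      case True
      then obtain x where x: "x \<in> X" "u \<in> root_path rt par (f x)" unfolding P_def by auto
      have "reach rt par (f x)" using rooted_reach[OF tr] fV XE x by auto
      then have "root_path rt par u \<subseteq> root_path rt par (f x)" using rp_props(3) x(2) by blast
      then have "(\<Union>x\<in>X \<union> {e}. root_path rt par (f x)) - {rt} = P"
        unfolding P_def u_def using x(1) by auto
      moreover have "X \<union> {e} \<subseteq> E" using XE e by auto
      ultimately have "r (X \<union> {e}) \<le> card P" using bnd unfolding subtree_edges_def by metis
      moreover have "card (P - {u}) = card P - 1" using finP True by auto
      ultimately show ?thesis using se r1X by simp
    qed
  qed
  have td: "tree_depth V' rt par' \<le> tree_depth V rt par"
    unfolding tree_depth_def
  proof (subst Max_le_iff)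
    show "finite (vdepth rt par' ` V')" using finV V'_def by auto
    show "vdepth rt par' ` V' \<noteq> {}" using rtV urt V'_def by auto
    show "\<forall>a\<in>vdepth rt par' ` V'. a \<le> Max (vdepth rt par ` V)"
    proof
      fix a assume "a \<in> vdepth rt par' ` V'"
      then obtain v where v: "v \<in> V'" "a = vdepth rt par' v" by auto
      have "vdepth rt par v \<le> Max (vdepth rt par ` V)" using finV v V'_def by auto
      then show "a \<le> Max (vdepth rt par ` V)" using CT[OF v(1)] v by auto
    qed
  qed
  show ?thesis using dd' td by blast
qed


lemma step_dd:
  assumes m: "matroid (E, r)" and dd: "depth_decomposition (E, r) V rt par f"
    and e: "e \<in> E" and r1: "r1 = r \<or> r1 = (\<lambda>Y. r (Y \<union> {e}) - r {e})"
  shows "\<exists>V' rt' par' f'. depth_decomposition (E - {e}, r1) V' rt' par' f'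
           \<and> tree_depth V' rt' par' \<le> tree_depth V rt par"
proof -
  have leq: "r1 Y \<le> r Y" if "Y \<subseteq> E - {e}" for Y
  proof -
    have "Y \<subseteq> E" "e \<notin> Y" using that by auto
    then have "r (Y \<union> {e}) \<le> r Y + r {e}" using matroid_add[OF m _ e] by blast
    then show ?thesis using r1 by auto
  qed
  have bnd: "\<And>X. X \<subseteq> E \<Longrightarrow> r X \<le> subtree_edges rt par f X"
    and rE: "r E = card V - 1"
    using dd unfolding depth_decomposition_def by auto
  have EE: "E - {e} \<union> {e} = E" using e by auto
  have mono: "\<And>X Y. X \<subseteq> Y \<Longrightarrow> Y \<subseteq> E \<Longrightarrow> r X \<le> r Y" using matroidD(3)[OF m] by blast
  show ?thesis
  proof (cases "r1 (E - {e}) = r E")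
    case True
    have "depth_decomposition (E - {e}, r1) V rt par f"
      unfolding depth_decomposition_def
    proof (intro conjI allI impI ballI)
      show "rooted_tree V rt par" using dd unfolding depth_decomposition_def by blast
      show "\<And>x. x \<in> fst (E - {e}, r1) \<Longrightarrow> f x \<in> V" using dd unfolding depth_decomposition_def by auto
      show "snd (E - {e}, r1) (fst (E - {e}, r1)) = card V - 1" using True rE by simp
      fix X assume "X \<subseteq> fst (E - {e}, r1)"
      then have X: "X \<subseteq> E - {e}" by simp
      then have "X \<subseteq> E" by auto
      then show "snd (E - {e}, r1) X \<le> subtree_edges rt par f X" using leq[OF X] bnd[of X] by simp
    qed
    then show ?thesis by blast
  next
    case False
    have re1: "r {e} \<le> 1" using matroid_single[OF m e] .
    have main: "r1 (E - {e}) + 1 = r E \<and> (\<forall>Y. Y \<subseteq> E - {e} \<longrightarrow> r1 Y + 1 \<le> r (Y \<union> {e})) \<and> r {e} = 1"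
      using r1
    proof
      assume r1r: "r1 = r"
      have a: "r E \<le> r (E - {e}) + r {e}" using matroid_add[OF m, of "E - {e}" e] e EE by auto
      have b: "r (E - {e}) \<le> r E" by (rule mono) auto
      have c: "r E = r (E - {e}) + 1" "r {e} = 1" using a b re1 False r1r by auto
      have d: "r Y + 1 \<le> r (Y \<union> {e})" if "Y \<subseteq> E - {e}" for Y
      proof -
        have "r ((Y \<union> {e}) \<union> (E - {e})) + r ((Y \<union> {e}) \<inter> (E - {e})) \<le> r (Y \<union> {e}) + r (E - {e})"
          using matroidD(4)[OF m, of "Y \<union> {e}" "E - {e}"] that e by auto
        moreover have "(Y \<union> {e}) \<union> (E - {e}) = E" "(Y \<union> {e}) \<inter> (E - {e}) = Y" using that e by auto
        ultimately show ?thesis using c by simp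
      qed
      show ?thesis using c d r1r by auto
    next
      assume r1r: "r1 = (\<lambda>Y. r (Y \<union> {e}) - r {e})"
      have a: "r1 (E - {e}) = r E - r {e}" using r1r EE by simp
      have b: "r {e} \<le> r E" by (rule mono) (use e in auto)
      have c: "r {e} = 1" using a False re1 by auto
      have d: "r {e} \<le> r (Y \<union> {e})" if "Y \<subseteq> E - {e}" for Y by (rule mono) (use that e in auto)
      have "\<forall>Y. Y \<subseteq> E - {e} \<longrightarrow> r1 Y + 1 \<le> r (Y \<union> {e})"
      proof (intro allI impI)
        fix Y assume "Y \<subseteq> E - {e}"
        then have "r {e} \<le> r (Y \<union> {e})" by (rule d)
        then show "r1 Y + 1 \<le> r (Y \<union> {e})" using c r1r by simp
      qed
      then show ?thesis using a b c r1r by auto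
    qed
    have fe: "f e \<noteq> rt"
    proof
      assume "f e = rt"
      then have "subtree_edges rt par f {e} = 0" unfolding subtree_edges_def by (simp add: rp_rt)
      moreover have "r {e} \<le> subtree_edges rt par f {e}" using bnd[of "{e}"] e by simp
      ultimately show False using main by simp
    qed
    show ?thesis
    proof (rule contract_dd[OF dd m e fe])
      show "r1 (E - {e}) + 1 = r E" using main by (elim conjE)
      fix Y assume "Y \<subseteq> E - {e}"
      then show "r1 Y + 1 \<le> r (Y \<union> {e})" using main by (elim conjE) blast
    qed
  qed
qed

lemma minor_gen:
  "card (C \<union> D) = n \<Longrightarrow> finite (C \<union> D) \<Longrightarrow> matroid (E, r) \<Longrightarrow> C \<subseteq> E \<Longrightarrow> D \<subseteq> E \<Longrightarrow> C \<inter> D = {}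
   \<Longrightarrow> depth_decomposition (E, r) V rt par f
   \<Longrightarrow> \<exists>V' rt' par' f'. depth_decomposition (E - C - D, \<lambda>Y. r (Y \<union> C) - r C) V' rt' par' f'
           \<and> tree_depth V' rt' par' \<le> tree_depth V rt par"
proof (induction n arbitrary: C D E r V rt par f)
  case 0
  then have "C = {}" "D = {}" by auto
  moreover have "r {} = 0" using matroid_empty[OF 0(3)] .
  ultimately have "depth_decomposition (E - C - D, \<lambda>Y. r (Y \<union> C) - r C) V rt par f"
    using 0(7) by simp
  then show ?case by blast
next
  case (Suc n)
  then have "C \<union> D \<noteq> {}" by auto
  then obtain e where eCD: "e \<in> C \<union> D" by blast
  have eE: "e \<in> E" using eCD Suc.prems by auto
  show ?case
  proof (cases "e \<in> C")
    case True
    define r1 where "r1 = (\<lambda>Y. r (Y \<union> {e}) - r {e})"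
    obtain V1 rt1 par1 f1 where d1: "depth_decomposition (E - {e}, r1) V1 rt1 par1 f1"
      "tree_depth V1 rt1 par1 \<le> tree_depth V rt par"
      using step_dd[OF Suc.prems(3) Suc.prems(7) eE, of r1] r1_def by blast
    have m1: "matroid (E - {e}, r1)" unfolding r1_def by (rule matroid_con[OF Suc.prems(3) eE])
    have eD: "e \<notin> D" using True Suc.prems(6) by auto
    have cc: "(C - {e}) \<union> D = (C \<union> D) - {e}" using eD by auto
    have card: "card ((C - {e}) \<union> D) = n" using Suc.prems(1,2) eCD cc by simp
    obtain V2 rt2 par2 f2 where d2:
      "depth_decomposition (E - {e} - (C - {e}) - D, \<lambda>Y. r1 (Y \<union> (C - {e})) - r1 (C - {e})) V2 rt2 par2 f2"
      "tree_depth V2 rt2 par2 \<le> tree_depth V1 rt1 par1"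
    proof -
      have fin: "finite ((C - {e}) \<union> D)" using Suc.prems(2) cc by simp
      have s1: "C - {e} \<subseteq> E - {e}" "D \<subseteq> E - {e}" "(C - {e}) \<inter> D = {}"
        using Suc.prems(4,5,6) eD by auto
      show ?thesis using Suc.IH[OF card fin m1 s1 d1(1)] that by blast
    qed
    have gs: "E - {e} - (C - {e}) - D = E - C - D" using True by auto
    have mono: "\<And>X Y. X \<subseteq> Y \<Longrightarrow> Y \<subseteq> E \<Longrightarrow> r X \<le> r Y" using matroidD(3)[OF Suc.prems(3)] by blast
    have "depth_decomposition (E - C - D, \<lambda>Y. r (Y \<union> C) - r C) V2 rt2 par2 f2"
    proof (rule dd_cong[OF d2(1)[unfolded gs]])
      fix Y assume Y: "Y \<subseteq> E - C - D"
      have u1: "Y \<union> (C - {e}) \<union> {e} = Y \<union> C" "C - {e} \<union> {e} = C" using True by auto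
      have "r {e} \<le> r C" by (rule mono) (use True Suc.prems(4) in auto)
      moreover have "r C \<le> r (Y \<union> C)" by (rule mono) (use Y Suc.prems(4) in auto)
      ultimately have "r {e} \<le> r C" "r C \<le> r (Y \<union> C)" by auto
      then show "r (Y \<union> C) - r C = r1 (Y \<union> (C - {e})) - r1 (C - {e})"
        unfolding r1_def u1 by simp
    qed
    then show ?thesis using order_trans[OF d2(2) d1(2)] by blast
  next
    case False
    then have eD: "e \<in> D" using eCD by auto
    obtain V1 rt1 par1 f1 where d1: "depth_decomposition (E - {e}, r) V1 rt1 par1 f1"
      "tree_depth V1 rt1 par1 \<le> tree_depth V rt par"
      using step_dd[OF Suc.prems(3) Suc.prems(7) eE, of r] by blast
    have m1: "matroid (E - {e}, r)" by (rule matroid_del[OF Suc.prems(3)])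
    have cc: "C \<union> (D - {e}) = (C \<union> D) - {e}" using False by auto
    have card: "card (C \<union> (D - {e})) = n" using Suc.prems(1,2) eCD cc by simp
    obtain V2 rt2 par2 f2 where d2:
      "depth_decomposition (E - {e} - C - (D - {e}), \<lambda>Y. r (Y \<union> C) - r C) V2 rt2 par2 f2"
      "tree_depth V2 rt2 par2 \<le> tree_depth V1 rt1 par1"
    proof -
      have fin: "finite (C \<union> (D - {e}))" using Suc.prems(2) cc by simp
      have s1: "C \<subseteq> E - {e}" "D - {e} \<subseteq> E - {e}" "C \<inter> (D - {e}) = {}"
        using Suc.prems(4,5,6) False by auto
      show ?thesis using Suc.IH[OF card fin m1 s1 d1(1)] that by blast
    qed
    have gs: "E - {e} - C - (D - {e}) = E - C - D" using eD by auto
    show ?thesis using d2(1)[unfolded gs] order_trans[OF d2(2) d1(2)] by blast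
  qed
qed

lemma path_pow: "((\<lambda>i::nat. i - 1) ^^ k) i = i - k"
  by (induction k) auto

lemma path_facts: "vdepth 0 (\<lambda>i. i - 1) i = i \<and> root_path 0 (\<lambda>i. i - 1) i = {0..i}"
proof (induction i)
  case 0
  then show ?case by (simp add: rp_rt)
next
  case (Suc i)
  have r: "reach 0 (\<lambda>i. i - 1) (Suc i)" unfolding reach_def by (intro exI[of _ "Suc i"]) (simp only: path_pow diff_self_eq_0)
  note R = reach_rec[OF r]
  show ?case using R Suc by (auto simp: atLeastAtMostSuc_conv)
qed

lemma exists_dd:
  assumes m: "matroid (E, r)"
  shows "\<exists>V rt par f. depth_decomposition (E, r) V rt par f"
proof -
  define n where "n = r E"
  define par where "par = (\<lambda>i::nat. i - 1)"
  have tr: "rooted_tree {0..n} 0 par" unfolding rooted_tree_def par_def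
  proof (intro conjI ballI)
    fix v assume "v \<in> {0..n}"
    then show "\<exists>k. ((\<lambda>i::nat. i - 1) ^^ k) v = 0" by (intro exI[of _ v]) (simp only: path_pow diff_self_eq_0)
  qed auto
  have dd: "depth_decomposition (E, r) {0..n} 0 par (\<lambda>_. n)"
    unfolding depth_decomposition_def
  proof (intro conjI allI impI ballI)
    show "rooted_tree {0..n} 0 par" by (rule tr)
    show "snd (E, r) (fst (E, r)) = card {0..n} - 1" using n_def by simp
    fix X assume X: "X \<subseteq> fst (E, r)"
    show "snd (E, r) X \<le> subtree_edges 0 par (\<lambda>_. n) X"
    proof (cases "X = {}")
      case True
      then show ?thesis using matroid_empty[OF m] by simp
    next
      case False
      have "subtree_edges 0 par (\<lambda>_. n) X = card ({0..n} - {0})"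
        unfolding subtree_edges_def par_def using path_facts[of n] False by simp
      also have "\<dots> = n" by simp
      finally show ?thesis using matroidD(3)[OF m, of X E] X n_def by simp
    qed
  qed auto
  then show ?thesis by blast
qed

theorem proposition3p3:
  fixes M M' :: "'a matroid"
  assumes "matroid M" and "minor M' M"
  shows "branch_depth M' \<le> branch_depth M"
proof -
  obtain E r where M: "M = (E, r)" by (cases M)
  have m: "matroid (E, r)" using assms(1) M by simp
  obtain C D where CD: "C \<subseteq> E" "D \<subseteq> E" "C \<inter> D = {}" "fst M' = E - C - D"
    "\<And>Y. Y \<subseteq> fst M' \<Longrightarrow> snd M' Y = r (Y \<union> C) - r C"
    using assms(2) M unfolding minor_def by auto
  have ex: "\<exists>d V rt par f. depth_decomposition M V rt par f \<and> tree_depth V rt par = d"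
    using exists_dd[OF m] M by blast
  obtain V rt par f where d: "depth_decomposition M V rt par f" "tree_depth V rt par = branch_depth M"
    using LeastI_ex[OF ex] unfolding branch_depth_def by blast
  have fin: "finite (C \<union> D)" using matroidD(1)[OF m] CD(1,2) finite_subset by auto
  obtain V' rt' par' f' where d':
    "depth_decomposition (E - C - D, \<lambda>Y. r (Y \<union> C) - r C) V' rt' par' f'"
    "tree_depth V' rt' par' \<le> tree_depth V rt par"
    using minor_gen[OF refl fin m CD(1,2,3) d(1)[unfolded M]] by blast
  have M': "M' = (E - C - D, snd M')" using CD(4) by (metis prod.collapse)
  have "depth_decomposition M' V' rt' par' f'"
    by (subst M', rule dd_cong[OF d'(1)]) (use CD(4,5) in auto)
  then have "branch_depth M' \<le> tree_depth V' rt' par'"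
    unfolding branch_depth_def by (intro Least_le) blast
  then show ?thesis using d'(2) d(2) by simp
qed

end
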